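(* If $\Phi$ is a depth-bounded fuzzy simulation between fuzzy automata $\mathcal{A}$ and $\mathcal{A}'$, then $\|\Phi\|_{\mathcal{A},\mathcal{A}'}\le S(\mathbf{L}(\mathcal{A}),\mathbf{L}(\mathcal{A}'))$.
   Context: $\mathcal{L}=\langle L,\le,\otimes,\Rightarrow,0,1\rangle$ is a complete residuated lattice: $\langle L,\le,0,1\rangle$ is a complete lattice with least element $0$ and greatest element $1$, $\langle L,\otimes,1\rangle$ is a commutative monoid, and $x\otimes y\le z$ iff $x\le (y\Rightarrow z)$. Fuzzy sets/relations are maps into $L$ ordered pointwise; $\varphi^{-1}(b,a)=\varphi(a,b)$; $(\varphi\circ\psi)(a,c)=\bigvee_b\varphi(a,b)\otimes\psi(b,c)$, $(f\circ\varphi)(b)=\bigvee_a f(a)\otimes\varphi(a,b)$, $(\varphi\circ g)(a)=\bigvee_b\varphi(a,b)\otimes g(b)$; $S(g,f)=\bigwedge_a(g(a)\Rightarrow f(a))$. A fuzzy automaton over $\Sigma$ is $\mathcal{A}=\langle A,\delta^{\mathcal{A}},\sigma^{\mathcal{A}},\tau^{\mathcal{A}}\rangle$ with $A$ nonempty, $\delta^{\mathcal{A}}:A\times\Sigma\times A\to L$, $\sigma^{\mathcal{A}},\tau^{\mathcal{A}}:A\to L$; $\delta^{\mathcal{A}}_s(x,y)=\delta^{\mathcal{A}}(x,s,y)$; similarly $\mathcal{A}'$ with states $A'$. $\mathbf{L}(\mathcal{A})(s_1\cdots s_k)=\sigma^{\mathcal{A}}\circ\delta^{\mathcal{A}}_{s_1}\circ\cdots\circ\delta^{\mathcal{A}}_{s_k}\circ\tau^{\mathcal{A}}$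 for words in $\Sigma^*$. $\|\varphi\|_{\mathcal{A},\mathcal{A}'}=S(\sigma^{\mathcal{A}},\sigma^{\mathcal{A}'}\circ\varphi^{-1})$. A depth-bounded fuzzy simulation between $\mathcal{A}$ and $\mathcal{A}'$ is a sequence $\Phi=(\varphi_n)_{n\in\mathbb{N}}$ of fuzzy relations $A\times A'\to L$ with $\varphi_n\le\varphi_{n-1}$ ($n\ge1$), $\varphi_0^{-1}\circ\tau^{\mathcal{A}}\le\tau^{\mathcal{A}'}$, and $\varphi_n^{-1}\circ\delta^{\mathcal{A}}_s\le\delta^{\mathcal{A}'}_s\circ\varphi_{n-1}^{-1}$ for all $s\in\Sigma$, $n\ge1$; its norm is $\|\Phi\|_{\mathcal{A},\mathcal{A}'}=\bigwedge_n\|\varphi_n\|_{\mathcal{A},\mathcal{A}'}$. *)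

theory Defs
  imports Main
begin

text \<open>Complete residuated lattice: complete lattice with a commutative monoid
  (multiplication = otimes, 1 = unit) whose unit is the top element, and a residuum.
  The least element 0 is bot.\<close>
class complete_residuated_lattice = complete_lattice + comm_monoid_mult +
  fixes residuum :: "'a \<Rightarrow> 'a \<Rightarrow> 'a"
  assumes one_is_top: "1 = top"
    and residuation: "x * y \<le> z \<longleftrightarrow> x \<le> residuum y z"

definition fconv :: "('a \<Rightarrow> 'b \<Rightarrow> 'l) \<Rightarrow> 'b \<Rightarrow> 'a \<Rightarrow> 'l" where
  "fconv \<phi> b a = \<phi> a b"

definition rel_comp :: "('a \<Rightarrow> 'b \<Rightarrow> 'l::complete_residuated_lattice) \<Rightarrow> ('b \<Rightarrow> 'c \<Rightarrow> 'l) \<Rightarrow> 'a \<Rightarrow> 'c \<Rightarrow> 'l" where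
  "rel_comp \<phi> \<psi> a c = (SUP b. \<phi> a b * \<psi> b c)"

definition set_rel_comp :: "('a \<Rightarrow> 'l::complete_residuated_lattice) \<Rightarrow> ('a \<Rightarrow> 'b \<Rightarrow> 'l) \<Rightarrow> 'b \<Rightarrow> 'l" where
  "set_rel_comp f \<phi> b = (SUP a. f a * \<phi> a b)"

definition rel_set_comp :: "('a \<Rightarrow> 'b \<Rightarrow> 'l::complete_residuated_lattice) \<Rightarrow> ('b \<Rightarrow> 'l) \<Rightarrow> 'a \<Rightarrow> 'l" where
  "rel_set_comp \<phi> g a = (SUP b. \<phi> a b * g b)"

definition subsethood :: "('a \<Rightarrow> 'l::complete_residuated_lattice) \<Rightarrow> ('a \<Rightarrow> 'l) \<Rightarrow> 'l" where
  "subsethood g f = (INF a. residuum (g a) (f a))"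

fun run :: "('a \<Rightarrow> 's \<Rightarrow> 'a \<Rightarrow> 'l::complete_residuated_lattice) \<Rightarrow> ('a \<Rightarrow> 'l) \<Rightarrow> 's list \<Rightarrow> 'a \<Rightarrow> 'l" where
  "run \<delta> \<tau> [] = \<tau>"
| "run \<delta> \<tau> (s # w) = rel_set_comp (\<lambda>x y. \<delta> x s y) (run \<delta> \<tau> w)"

definition lang :: "('a \<Rightarrow> 's \<Rightarrow> 'a \<Rightarrow> 'l::complete_residuated_lattice) \<Rightarrow> ('a \<Rightarrow> 'l) \<Rightarrow> ('a \<Rightarrow> 'l) \<Rightarrow> 's list \<Rightarrow> 'l" where
  "lang \<delta> \<sigma> \<tau> w = (SUP a. \<sigma> a * run \<delta> \<tau> w a)"

definition rel_norm :: "('a \<Rightarrow> 'l::complete_residuated_lattice) \<Rightarrow> ('b \<Rightarrow> 'l) \<Rightarrow> ('a \<Rightarrow> 'b \<Rightarrow> 'l) \<Rightarrow> 'l" where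
  "rel_norm \<sigma> \<sigma>' \<phi> = subsethood \<sigma> (set_rel_comp \<sigma>' (fconv \<phi>))"

definition depth_bounded_fuzzy_sim ::
  "('a \<Rightarrow> 's \<Rightarrow> 'a \<Rightarrow> 'l::complete_residuated_lattice) \<Rightarrow> ('a \<Rightarrow> 'l)
   \<Rightarrow> ('b \<Rightarrow> 's \<Rightarrow> 'b \<Rightarrow> 'l) \<Rightarrow> ('b \<Rightarrow> 'l) \<Rightarrow> (nat \<Rightarrow> 'a \<Rightarrow> 'b \<Rightarrow> 'l) \<Rightarrow> bool" where
  "depth_bounded_fuzzy_sim \<delta> \<tau> \<delta>' \<tau>' \<Phi> \<longleftrightarrow>
     (\<forall>n\<ge>1. \<Phi> n \<le> \<Phi> (n - 1)) \<and>
     rel_set_comp (fconv (\<Phi> 0)) \<tau> \<le> \<tau>' \<and>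
     (\<forall>s. \<forall>n\<ge>1. rel_comp (fconv (\<Phi> n)) (\<lambda>x y. \<delta> x s y)
                  \<le> rel_comp (\<lambda>x y. \<delta>' x s y) (fconv (\<Phi> (n - 1))))"

definition seq_norm :: "('a \<Rightarrow> 'l::complete_residuated_lattice) \<Rightarrow> ('b \<Rightarrow> 'l) \<Rightarrow> (nat \<Rightarrow> 'a \<Rightarrow> 'b \<Rightarrow> 'l) \<Rightarrow> 'l" where
  "seq_norm \<sigma> \<sigma>' \<Phi> = (INF n. rel_norm \<sigma> \<sigma>' (\<Phi> n))"

end

theory Submission
  imports Defs
begin

lemma crl_mono1: "(a::'l::complete_residuated_lattice) \<le> b \<Longrightarrow> a * c \<le> b * c"
proof -
  assume "a \<le> b"
  have "b \<le> residuum c (b * c)" using residuation[of b c "b*c"] by simp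
  then have "a \<le> residuum c (b * c)" using \<open>a \<le> b\<close> by (rule order_trans[rotated])
  then show ?thesis using residuation by blast
qed

lemma crl_mono: "(a::'l::complete_residuated_lattice) \<le> b \<Longrightarrow> c \<le> d \<Longrightarrow> a * c \<le> b * d"
proof -
  assume "a \<le> b" "c \<le> d"
  have "a * c \<le> b * c" using crl_mono1[OF \<open>a \<le> b\<close>] .
  also have "b * c = c * b" by (simp add: mult.commute)
  also have "\<dots> \<le> d * b" using crl_mono1[OF \<open>c \<le> d\<close>] .
  also have "\<dots> = b * d" by (simp add: mult.commute)
  finally show ?thesis .
qed

lemma crl_mult_SUP: "(x::'l::complete_residuated_lattice) * (SUP i. f i) = (SUP i. x * f i)"
proof (rule antisym)
  have "(SUP i. f i) \<le> residuum x (SUP i. x * f i)"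
  proof (rule SUP_least)
    fix i
    have "f i * x \<le> (SUP i. x * f i)" by (metis SUP_upper UNIV_I mult.commute)
    then show "f i \<le> residuum x (SUP i. x * f i)" using residuation by blast
  qed
  then have "(SUP i. f i) * x \<le> (SUP i. x * f i)" using residuation by blast
  then show "x * (SUP i. f i) \<le> (SUP i. x * f i)" by (simp add: mult.commute)
next
  show "(SUP i. x * f i) \<le> x * (SUP i. f i)"
    by (rule SUP_least, rule crl_mono, simp_all add: SUP_upper)
qed

lemma crl_SUP_mult: "(SUP i. f i) * (x::'l::complete_residuated_lattice) = (SUP i. f i * x)"
  using crl_mult_SUP[of x f] by (simp add: mult.commute)

lemma SUP_swap2: "(SUP i. SUP j. (f i j :: 'l::complete_lattice)) = (SUP j. SUP i. f i j)"
  by (rule SUP_commute)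

lemma antitone_Phi:
  fixes m n :: nat
  assumes "\<forall>n\<ge>1. \<Phi> n \<le> \<Phi> (n - 1)"
  shows "m \<le> n \<Longrightarrow> \<Phi> n \<le> (\<Phi> m :: 'a \<Rightarrow> 'b \<Rightarrow> 'l::complete_lattice)"
proof (induction n)
  case 0 then show ?case by simp
next
  case (Suc n)
  show ?case
  proof (cases "m = Suc n")
    case True then show ?thesis by simp
  next
    case False
    then have "m \<le> n" using Suc.prems by simp
    have "\<Phi> (Suc n) \<le> \<Phi> n" using assms by (metis diff_Suc_1 le_add1 plus_1_eq_Suc)
    then show ?thesis using Suc.IH[OF \<open>m \<le> n\<close>] by (rule order_trans)
  qed
qed

lemma key:
  fixes \<delta> :: "'a \<Rightarrow> 's \<Rightarrow> 'a \<Rightarrow> 'l::complete_residuated_lattice"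
    and \<tau> :: "'a \<Rightarrow> 'l"
    and \<delta>' :: "'b \<Rightarrow> 's \<Rightarrow> 'b \<Rightarrow> 'l"
    and \<tau>' :: "'b \<Rightarrow> 'l"
    and \<Phi> :: "nat \<Rightarrow> 'a \<Rightarrow> 'b \<Rightarrow> 'l"
  assumes sim: "depth_bounded_fuzzy_sim \<delta> \<tau> \<delta>' \<tau>' \<Phi>"
  shows "length w \<le> n \<Longrightarrow> (SUP a. \<Phi> n a b * run \<delta> \<tau> w a) \<le> run \<delta>' \<tau>' w b"
proof (induction w arbitrary: n b)
  case Nil
  have anti: "\<Phi> n \<le> \<Phi> 0" using antitone_Phi[of \<Phi> 0 n] sim
    unfolding depth_bounded_fuzzy_sim_def by blast
  have "(SUP a. \<Phi> n a b * \<tau> a) \<le> (SUP a. \<Phi> 0 a b * \<tau> a)"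
    by (rule SUP_mono, rule bexI[of _ _], rule crl_mono, use anti in \<open>auto simp: le_fun_def\<close>)
  also have "\<dots> \<le> \<tau>' b" using sim
    unfolding depth_bounded_fuzzy_sim_def rel_set_comp_def fconv_def le_fun_def by blast
  finally show ?case by simp
next
  case (Cons s w)
  obtain m where n: "n = Suc m" and m: "length w \<le> m" using Cons.prems
    by (cases n) auto
  have step: "\<And>c d. (SUP a. \<Phi> n a d * \<delta> a s c) \<le> (SUP e. \<delta>' d s e * \<Phi> m c e)"
  proof -
    fix c d
    have "rel_comp (fconv (\<Phi> n)) (\<lambda>x y. \<delta> x s y) \<le> rel_comp (\<lambda>x y. \<delta>' x s y) (fconv (\<Phi> (n - 1)))"
    proof -
      have "\<forall>s. \<forall>n\<ge>1. rel_comp (fconv (\<Phi> n)) (\<lambda>x y. \<delta> x s y)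
                  \<le> rel_comp (\<lambda>x y. \<delta>' x s y) (fconv (\<Phi> (n - 1)))"
        using sim unfolding depth_bounded_fuzzy_sim_def by blast
      then show ?thesis unfolding n by (simp only: One_nat_def)
    qed
    then show "(SUP a. \<Phi> n a d * \<delta> a s c) \<le> (SUP e. \<delta>' d s e * \<Phi> m c e)"
      unfolding rel_comp_def fconv_def le_fun_def n by simp
  qed
  have "(SUP a. \<Phi> n a b * run \<delta> \<tau> (s # w) a)
        = (SUP a. SUP c. \<Phi> n a b * (\<delta> a s c * run \<delta> \<tau> w c))"
    by (simp add: rel_set_comp_def crl_mult_SUP)
  also have "\<dots> = (SUP c. SUP a. (\<Phi> n a b * \<delta> a s c) * run \<delta> \<tau> w c)"
    by (subst SUP_commute) (simp add: mult.assoc)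
  also have "\<dots> = (SUP c. (SUP a. \<Phi> n a b * \<delta> a s c) * run \<delta> \<tau> w c)"
    by (simp add: crl_SUP_mult)
  also have "\<dots> \<le> (SUP c. (SUP e. \<delta>' b s e * \<Phi> m c e) * run \<delta> \<tau> w c)"
    by (rule SUP_mono, rule bexI[of _ _], rule crl_mono1, rule step, auto)
  also have "\<dots> = (SUP c. SUP e. \<delta>' b s e * (\<Phi> m c e * run \<delta> \<tau> w c))"
    by (simp add: crl_SUP_mult mult.assoc)
  also have "\<dots> = (SUP e. \<delta>' b s e * (SUP c. \<Phi> m c e * run \<delta> \<tau> w c))"
    by (subst SUP_commute) (simp add: crl_mult_SUP)
  also have "\<dots> \<le> (SUP e. \<delta>' b s e * run \<delta>' \<tau>' w e)"
    by (rule SUP_mono, rule bexI[of _ _], rule crl_mono, rule order_refl, rule Cons.IH[OF m], auto)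
  also have "\<dots> = run \<delta>' \<tau>' (s # w) b"
    by (simp add: rel_set_comp_def)
  finally show ?case .
qed

theorem mainTheorem7:
  fixes \<delta> :: "'a \<Rightarrow> 's \<Rightarrow> 'a \<Rightarrow> 'l::complete_residuated_lattice"
    and \<sigma> \<tau> :: "'a \<Rightarrow> 'l"
    and \<delta>' :: "'b \<Rightarrow> 's \<Rightarrow> 'b \<Rightarrow> 'l"
    and \<sigma>' \<tau>' :: "'b \<Rightarrow> 'l"
    and \<Phi> :: "nat \<Rightarrow> 'a \<Rightarrow> 'b \<Rightarrow> 'l"
  assumes "depth_bounded_fuzzy_sim \<delta> \<tau> \<delta>' \<tau>' \<Phi>"
  shows "seq_norm \<sigma> \<sigma>' \<Phi> \<le> subsethood (lang \<delta> \<sigma> \<tau>) (lang \<delta>' \<sigma>' \<tau>')"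
  unfolding subsethood_def
proof (rule INF_greatest)
  fix w :: "'s list"
  define N where "N = seq_norm \<sigma> \<sigma>' \<Phi>"
  define k where "k = length w"
  have Nk: "\<And>a. N * \<sigma> a \<le> (SUP b. \<sigma>' b * \<Phi> k a b)"
  proof -
    fix a
    have "N \<le> rel_norm \<sigma> \<sigma>' (\<Phi> k)" unfolding N_def seq_norm_def by (rule INF_lower) simp
    also have "\<dots> \<le> residuum (\<sigma> a) (SUP b. \<sigma>' b * \<Phi> k a b)"
      unfolding rel_norm_def subsethood_def set_rel_comp_def fconv_def by (rule INF_lower) simp
    finally show "N * \<sigma> a \<le> (SUP b. \<sigma>' b * \<Phi> k a b)" using residuation by blast
  qed
  have "N * lang \<delta> \<sigma> \<tau> w = (SUP a. (N * \<sigma> a) * run \<delta> \<tau> w a)"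
    by (simp add: lang_def crl_mult_SUP mult.assoc)
  also have "\<dots> \<le> (SUP a. (SUP b. \<sigma>' b * \<Phi> k a b) * run \<delta> \<tau> w a)"
    by (rule SUP_mono, rule bexI[of _ _], rule crl_mono1, rule Nk, auto)
  also have "\<dots> = (SUP a. SUP b. \<sigma>' b * (\<Phi> k a b * run \<delta> \<tau> w a))"
    by (simp add: crl_SUP_mult mult.assoc)
  also have "\<dots> = (SUP b. \<sigma>' b * (SUP a. \<Phi> k a b * run \<delta> \<tau> w a))"
    by (subst SUP_commute) (simp add: crl_mult_SUP)
  also have "\<dots> \<le> (SUP b. \<sigma>' b * run \<delta>' \<tau>' w b)"
    by (rule SUP_mono, rule bexI[of _ _], rule crl_mono, rule order_refl,
        rule key[OF assms], auto simp: k_def)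
  also have "\<dots> = lang \<delta>' \<sigma>' \<tau>' w" by (simp add: lang_def)
  finally have "N * lang \<delta> \<sigma> \<tau> w \<le> lang \<delta>' \<sigma>' \<tau>' w" .
  then have "lang \<delta> \<sigma> \<tau> w * N \<le> lang \<delta>' \<sigma>' \<tau>' w" by (simp add: mult.commute)
  then show "seq_norm \<sigma> \<sigma>' \<Phi> \<le> residuum (lang \<delta> \<sigma> \<tau> w) (lang \<delta>' \<sigma>' \<tau>' w)"
    unfolding N_def using residuation by (metis mult.commute)
qed

end
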